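(* Let $q\in\mathbb{N}$, $q\geq3$, let $n\ge1$ and $a_1,\dots,a_n\in\mathbb{Q}\cap[0,q-1]$, and let $K$ be the attractor of the iterated function system $\{f_i(x)=\frac{x+a_i}{q}\}_{i=1}^n$, i.e. the unique nonempty compact set with $K=\bigcup_{i=1}^n f_i(K)$. Suppose $K$ is nowhere dense in $[0,1]$. Then for every $t\in(0,1)$ that has a universal $q$-adic expansion, $$K-t\subset\mathbb{Q}^c,\qquad K+t\subset\mathbb{Q}^c,\qquad \frac{K}{t}\subset\mathbb{Q}^c.$$ Moreover, for every $t\in(1,\infty)$ such that $1/t$ has a universal $q$-adic expansion, $tK\subset\mathbb{Q}^c$.
   Context: A $q$-adic expansion of $t\in(0,1)$ is a sequence $(t_k)\in\{0,1,\dots,q-1\}^{\mathbb{N}}$ with $t=\sum_{k\geq1}t_k q^{-k}$. Such an expansion is universal if for every $k\geq1$ and every word $x_1\cdots x_k\in\{0,\dots,q-1\}^k$ there is $k_0\in\mathbb{N}$ with $t_{k_0+1}\cdots t_{k_0+k}=x_1\cdots x_k$; $t$ has a universal $q$-adic expansion if some $q$-adic expansion of it is universal. Notation: $K\pm t=\{x\pm t:x\in K\}$, $tK=\{tx:x\in K\setminus\{0\}\}$, $\frac{K}{t}=\{t^{-1}x:x\in K\setminus\{0\}\}$. $\mathbb{Q}^c$ denotes the set of irrational real numbers. *)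

theory Defs
  imports "HOL-Analysis.Analysis"
begin

text \<open>A q-adic expansion of t: digits d 1, d 2, ... (the value d 0 is unused),
  each in {0,...,q-1}, with t = sum over k >= 1 of d k / q^k.\<close>
definition q_adic_expansion :: "nat \<Rightarrow> real \<Rightarrow> (nat \<Rightarrow> nat) \<Rightarrow> bool" where
  "q_adic_expansion q t d \<longleftrightarrow>
     (\<forall>k\<ge>1. d k < q) \<and> (\<lambda>k. real (d (Suc k)) / real q ^ Suc k) sums t"

definition universal_expansion :: "nat \<Rightarrow> (nat \<Rightarrow> nat) \<Rightarrow> bool" where
  "universal_expansion q d \<longleftrightarrow>
     (\<forall>w::nat list. length w \<ge> 1 \<and> set w \<subseteq> {..<q} \<longrightarrow>
        (\<exists>k0. \<forall>j<length w. d (k0 + j + 1) = w ! j))"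

definition has_universal_expansion :: "nat \<Rightarrow> real \<Rightarrow> bool" where
  "has_universal_expansion q t \<longleftrightarrow>
     (\<exists>d. q_adic_expansion q t d \<and> universal_expansion q d)"

end

theory Submission
  imports Defs
begin

definition sh :: "nat \<Rightarrow> (nat \<Rightarrow> nat) \<Rightarrow> nat \<Rightarrow> real" where
  "sh q d m = (\<Sum>k. real (d (m + k + 1)) / real q ^ (k + 1))"

lemma sh_summable:
  assumes q: "q \<ge> 2" and dq: "\<forall>k\<ge>1. d k < q"
  shows "summable (\<lambda>k. real (d (m + k + 1)) / real q ^ (k + 1))"
proof (rule summable_comparison_test')
  show "summable (\<lambda>k. real q * (1 / real q) ^ (k+1))"
  proof -
    have "summable (\<lambda>k. (1 / real q) ^ k)" using q by (intro summable_geometric) auto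
    from summable_ignore_initial_segment[OF this, of 1]
    have "summable (\<lambda>k. (1 / real q) ^ (k+1))" by simp
    then show ?thesis by (rule summable_mult)
  qed
  fix k :: nat assume "k \<ge> 0"
  have "d (m+k+1) < q" using dq by auto
  then show "norm (real (d (m + k + 1)) / real q ^ (k + 1)) \<le> real q * (1 / real q) ^ (k+1)"
    using q by (simp add: power_divide divide_right_mono del: power_Suc)
qed

lemma sh_step:
  assumes q: "q \<ge> 2" and dq: "\<forall>k\<ge>1. d k < q"
  shows "sh q d m = real (d (m+1)) / real q + sh q d (Suc m) / real q"
proof -
  let ?f = "\<lambda>k. real (d (m + k + 1)) / real q ^ (k + 1)"
  have s: "summable ?f" by (rule sh_summable[OF q dq])
  have "(\<Sum>k. ?f (Suc k)) = sh q d m - ?f 0" using suminf_split_head[OF s] by (simp add: sh_def)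
  moreover have "(\<lambda>k. ?f (Suc k)) = (\<lambda>k. (real (d (Suc m + k + 1)) / real q ^ (k + 1)) / real q)"
    by (auto simp: field_simps)
  moreover have "(\<Sum>k. (real (d (Suc m + k + 1)) / real q ^ (k + 1)) / real q) = sh q d (Suc m) / real q"
    unfolding sh_def by (rule suminf_divide[OF sh_summable[OF q dq]])
  ultimately show ?thesis by simp
qed

lemma sh_bounds:
  assumes q: "q \<ge> 2" and dq: "\<forall>k\<ge>1. d k < q"
  shows "0 \<le> sh q d m \<and> sh q d m \<le> 1"
proof
  show "0 \<le> sh q d m" unfolding sh_def
    by (rule suminf_nonneg[OF sh_summable[OF q dq]]) simp
  have g: "(\<lambda>k. (real q - 1) / real q * (1 / real q) ^ k) sums ((real q - 1) / real q * (1 / (1 - 1 / real q)))"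
    using q by (intro sums_mult geometric_sums) auto
  have "(real q - 1) / real q * (1 / (1 - 1 / real q)) = 1" using q by (simp add: field_simps)
  with g have g2: "(\<lambda>k. (real q - 1) / real q ^ (k+1)) sums 1"
    by (simp add: power_divide field_simps)
  have "sh q d m \<le> 1" unfolding sh_def
  proof (rule suminf_le[OF _ sh_summable[OF q dq] sums_summable[OF g2], unfolded sums_unique[OF g2, symmetric]])
    fix k
    have "d (m+k+1) < q" using dq by auto
    then have "real (d (m+k+1)) \<le> real q - 1" by linarith
    then show "real (d (m + k + 1)) / real q ^ (k + 1) \<le> (real q - 1) / real q ^ (k + 1)"
      by (simp add: divide_right_mono del: power_Suc)
  qed
  then show "sh q d m \<le> 1" .
qed

lemma sh_int:
  assumes q: "q \<ge> 2" and e: "q_adic_expansion q u d"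
  shows "real q ^ m * u - sh q d m \<in> \<int>"
proof (induction m)
  case 0
  have "(\<lambda>k. real (d (Suc k)) / real q ^ Suc k) sums u" using e by (simp add: q_adic_expansion_def)
  then have "sh q d 0 = u" unfolding sh_def by (simp add: sums_iff)
  then show ?case by simp
next
  case (Suc m)
  have dq: "\<forall>k\<ge>1. d k < q" using e by (simp add: q_adic_expansion_def)
  have "real q ^ Suc m * u - sh q d (Suc m) = real q * (real q ^ m * u - sh q d m) + real (d (m+1))"
    using sh_step[OF q dq, of m] q by (simp add: field_simps)
  also have "\<dots> \<in> \<int>" using Suc by (intro Ints_add Ints_mult) auto
  finally show ?case .
qed

lemma sh_prefix:
  assumes q: "q \<ge> 2" and dq: "\<forall>k\<ge>1. d k < q"
  shows "sh q d m = (\<Sum>j<L. real (d (m+j+1)) / real q ^ (j+1)) + sh q d (m+L) / real q ^ L"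
proof (induction L)
  case 0 then show ?case by simp
next
  case (Suc L)
  have "sh q d (m+L) / real q ^ L = real (d (m+L+1)) / real q ^ (L+1) + sh q d (m + Suc L) / real q ^ Suc L"
    using sh_step[OF q dq, of "m+L"] q by (simp add: field_simps)
  then show ?case using Suc by simp
qed

lemma digits_sum:
  fixes N q :: nat
  shows "(\<Sum>i<L. (N div q^i mod q) * q^i) = N mod q^L"
proof (induction L)
  case 0 then show ?case by simp
next
  case (Suc L)
  have "N mod q ^ Suc L = q^L * (N div q^L mod q) + N mod q^L"
    using mod_mult2_eq[of N "q^L" q] by (simp add: mult.commute)
  then show ?case using Suc by simp
qed

lemma sh_dense:
  assumes q: "q \<ge> 2" and e: "q_adic_expansion q u d" and un: "universal_expansion q d"
    and y: "0 \<le> y" "y \<le> 1" and L: "L \<ge> 1"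
  shows "\<exists>m. \<bar>sh q d m - y\<bar> \<le> 1 / real q ^ L"
proof -
  have dq: "\<forall>k\<ge>1. d k < q" using e by (simp add: q_adic_expansion_def)
  have qL: "real q ^ L > 0" using q by simp
  define N where "N = min (nat \<lfloor>y * real q ^ L\<rfloor>) (q^L - 1)"
  have qL1: "q^L \<ge> 1" using q by simp
  have NqL: "N < q^L" unfolding N_def using qL1 by linarith
  have fl: "real (nat \<lfloor>y * real q ^ L\<rfloor>) \<le> y * real q ^ L"
    using y qL by (simp add: of_nat_nat)
  have N1: "real N \<le> y * real q ^ L" unfolding N_def using fl by (simp add: min_def)
  have N2: "y * real q ^ L \<le> real N + 1"
  proof (cases "nat \<lfloor>y * real q ^ L\<rfloor> \<le> q^L - 1")
    case True
    then have "N = nat \<lfloor>y * real q ^ L\<rfloor>" unfolding N_def by simp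
    then show ?thesis using y qL by (simp add: of_nat_nat)
  next
    case False
    then have "N = q^L - 1" unfolding N_def by simp
    then have "real N + 1 = real q ^ L" using qL1 by (simp add: of_nat_diff)
    then show ?thesis using y qL by simp
  qed
  define w where "w = map (\<lambda>j. N div q^(L - Suc j) mod q) [0..<L]"
  have "length w \<ge> 1 \<and> set w \<subseteq> {..<q}" unfolding w_def using L q by auto
  then obtain k0 where k0: "\<forall>j<length w. d (k0 + j + 1) = w ! j"
    using un unfolding universal_expansion_def by blast
  have dj: "\<And>j. j < L \<Longrightarrow> d (k0 + j + 1) = N div q^(L - Suc j) mod q"
    using k0 unfolding w_def by auto
  have "(\<Sum>j<L. real (d (k0+j+1)) / real q ^ (j+1))
       = (\<Sum>j<L. real ((N div q^(L - Suc j) mod q) * q^(L - Suc j))) / real q ^ L"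
    unfolding sum_divide_distrib
  proof (rule sum.cong[OF refl])
    fix j assume "j \<in> {..<L}"
    then have jl: "j < L" by simp
    then have "L = (j+1) + (L - Suc j)" by simp
    then have "real q ^ L = real q ^ (j+1) * real q ^ (L - Suc j)"
      by (metis power_add)
    then show "real (d (k0+j+1)) / real q ^ (j+1) = real ((N div q^(L - Suc j) mod q) * q^(L - Suc j)) / real q ^ L"
      using dj[OF jl] q by (simp add: field_simps)
  qed
  also have "(\<Sum>j<L. real ((N div q^(L - Suc j) mod q) * q^(L - Suc j)))
      = real (\<Sum>i<L. (N div q^i mod q) * q^i)"
    by (subst sum.nat_diff_reindex[symmetric, where n=L]) simp
  also have "\<dots> = real N" using digits_sum[of N q L] NqL by simp
  finally have S: "(\<Sum>j<L. real (d (k0+j+1)) / real q ^ (j+1)) = real N / real q ^ L" .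
  have P: "sh q d k0 = real N / real q ^ L + sh q d (k0+L) / real q ^ L"
    using sh_prefix[OF q dq, of k0 L] S by simp
  have B: "0 \<le> sh q d (k0+L)" "sh q d (k0+L) \<le> 1" using sh_bounds[OF q dq] by auto
  have "y \<le> (real N + 1) / real q ^ L" "real N / real q ^ L \<le> y"
    using N1 N2 qL by (simp_all add: field_simps)
  moreover have "sh q d (k0+L) / real q ^ L \<le> 1 / real q ^ L" "0 \<le> sh q d (k0+L) / real q ^ L"
    using B qL by (simp_all add: divide_right_mono)
  ultimately have "\<bar>sh q d k0 - y\<bar> \<le> 1 / real q ^ L"
    unfolding P by (simp add: add_divide_distrib abs_le_iff) 
  then show ?thesis by blast
qed

lemma common_denom:
  assumes "\<forall>i\<in>I. a i \<in> \<rat>" and "finite I"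
  shows "\<exists>D::int. D > 0 \<and> (\<forall>i\<in>I. of_int D * (a i :: real) \<in> \<int>)"
proof -
  have "\<forall>i\<in>I. \<exists>v::int. v > 0 \<and> of_int v * a i \<in> \<int>"
  proof
    fix i assume "i \<in> I"
    then obtain p v where "v > 0" "a i = of_int p / of_int v" using assms(1) Rats_cases' by metis
    then show "\<exists>v::int. v > 0 \<and> of_int v * a i \<in> \<int>" by (intro exI[of _ v]) auto
  qed
  then obtain V where V: "\<forall>i\<in>I. V i > 0 \<and> of_int (V i) * a i \<in> \<int>" by metis
  define D where "D = (\<Prod>i\<in>I. V i)"
  have "D > 0" unfolding D_def using V by (intro prod_pos) auto
  moreover have "\<forall>i\<in>I. of_int D * a i \<in> \<int>"
  proof
    fix i assume i: "i \<in> I"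
    have "D = V i * (\<Prod>j\<in>I - {i}. V j)" unfolding D_def using prod.remove[OF assms(2) i] by simp
    then have "of_int D * a i = of_int (\<Prod>j\<in>I - {i}. V j) * (of_int (V i) * a i)" by simp
    also have "\<dots> \<in> \<int>" using V i by (metis Ints_mult Ints_of_int)
    finally show "of_int D * a i \<in> \<int>" .
  qed
  ultimately show ?thesis by blast
qed

lemma orbit:
  assumes KK: "K = (\<Union>i\<in>{1..n}. (\<lambda>x. (x + a i) / real q) ` K)"
    and D: "\<forall>i\<in>{1..n}. of_int D * a i \<in> \<int>" and x: "x \<in> K" and q: "q \<ge> 2"
  shows "\<exists>y\<in>K. of_int D * (real q ^ m * x - y) \<in> \<int>"
proof (induction m)
  case 0 then show ?case using x by (intro bexI[of _ x]) auto
next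
  case (Suc m)
  then obtain y where y: "y \<in> K" "of_int D * (real q ^ m * x - y) \<in> \<int>" by blast
  then obtain i y' where i: "i \<in> {1..n}" "y' \<in> K" "y = (y' + a i) / real q"
    using KK by blast
  have yq: "real q * y = y' + a i" using i(3) q by (simp add: field_simps)
  have "real q * (of_int D * (real q ^ m * x - y)) + of_int D * a i
     = of_int D * (real q ^ Suc m * x) - of_int D * (real q * y) + of_int D * a i"
    by (simp add: algebra_simps)
  also have "\<dots> = of_int D * (real q ^ Suc m * x - y')" unfolding yq by (simp add: algebra_simps)
  finally have "of_int D * (real q ^ Suc m * x - y') = real q * (of_int D * (real q ^ m * x - y)) + of_int D * a i" by simp
  also have "\<dots> \<in> \<int>" using y D i by (intro Ints_add Ints_mult[OF Ints_of_nat]) auto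
  finally show ?case using i(2) by blast
qed

lemma affine_interior:
  fixes s e :: real
  assumes "s \<noteq> 0" "interior K = {}"
  shows "interior ((\<lambda>y. s*y+e) ` K) = {}"
proof (rule ccontr)
  assume "interior ((\<lambda>y. s*y+e) ` K) \<noteq> {}"
  then obtain z where "z \<in> interior ((\<lambda>y. s*y+e) ` K)" by blast
  then obtain \<epsilon> where \<epsilon>: "\<epsilon> > 0" "ball z \<epsilon> \<subseteq> (\<lambda>y. s*y+e) ` K" by (meson mem_interior)
  then obtain y0 where y0: "y0 \<in> K" "z = s*y0+e" using centre_in_ball by blast
  have "ball y0 (\<epsilon> / \<bar>s\<bar>) \<subseteq> K"
  proof
    fix y' assume "y' \<in> ball y0 (\<epsilon> / \<bar>s\<bar>)"
    then have "\<bar>y0 - y'\<bar> < \<epsilon> / \<bar>s\<bar>" by (simp add: dist_real_def)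
    then have "\<bar>s\<bar> * \<bar>y0 - y'\<bar> < \<epsilon>" using assms(1) by (simp add: field_simps)
    then have "s*y'+e \<in> ball z \<epsilon>" using y0 by (simp add: dist_real_def abs_mult[symmetric] algebra_simps)
    then obtain y'' where "y'' \<in> K" "s*y'+e = s*y''+e" using \<epsilon> by blast
    then show "y' \<in> K" using assms(1) by simp
  qed
  then have "y0 \<in> interior K" using \<epsilon> assms(1) by (meson divide_pos_pos mem_interior zero_less_abs_iff)
  then show False using assms(2) by simp
qed

lemma finite_union_interior:
  fixes P :: "'a \<Rightarrow> real set"
  assumes "finite F" "\<forall>e\<in>F. closed (P e) \<and> interior (P e) = {}"
  shows "interior (\<Union>e\<in>F. P e) = {}"
  using assms
proof (induction F rule: finite_induct)
  case empty then show ?case by simp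
next
  case (insert e F)
  then have "interior ((\<Union>e\<in>F. P e) \<union> P e) = interior (\<Union>e\<in>F. P e)"
    by (intro interior_closed_Un_empty_interior) (auto intro!: closed_UN)
  then show ?case using insert by (simp add: Un_commute)
qed

lemma main:
  fixes n q :: nat and a :: "nat \<Rightarrow> real"
  assumes q: "q \<ge> 2"
    and aQ: "\<forall>i\<in>{1..n}. a i \<in> \<rat>"
    and cK: "compact K"
    and KK: "K = (\<Union>i\<in>{1..n}. (\<lambda>x. (x + a i) / real q) ` K)"
    and iK: "interior K = {}"
    and hu: "has_universal_expansion q u"
    and sQ: "s \<in> \<rat>" and s0: "s \<noteq> 0" and rQ: "r \<in> \<rat>"
    and x: "x \<in> K" and ux: "u = s * x + r"
  shows False
proof -
  obtain d where e: "q_adic_expansion q u d" and un: "universal_expansion q d"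
    using hu unfolding has_universal_expansion_def by blast
  have dq: "\<forall>k\<ge>1. d k < q" using e by (simp add: q_adic_expansion_def)
  obtain D :: int where D: "D > 0" "\<forall>i\<in>{1..n}. of_int D * a i \<in> \<int>"
    using common_denom[OF aQ] by auto
  obtain p1 v1 where pv1: "v1 > 0" "s = of_int p1 / of_int v1" using sQ Rats_cases' by metis
  obtain p2 v2 where pv2: "v2 > 0" "r = of_int p2 / of_int v2" using rQ Rats_cases' by metis
  define E where "E = D * v1 * v2"
  have E0: "E > 0" unfolding E_def using D pv1 pv2 by simp
  obtain M where M: "\<forall>y\<in>K. \<bar>y\<bar> \<le> M"
    using compact_imp_bounded[OF cK] unfolding bounded_iff by auto
  define B where "B = \<lceil>of_int E * (1 + \<bar>s\<bar> * M)\<rceil>"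
  define F where "F = (\<lambda>j. of_int j / of_int E :: real) ` {-B..B}"
  define S where "S = (\<Union>e\<in>F. (\<lambda>y. s*y+e) ` K)"
  have fF: "finite F" unfolding F_def by simp
  have cP: "closed ((\<lambda>y. s*y+e) ` K)" for e
    by (intro compact_imp_closed compact_continuous_image[OF _ cK] continuous_intros)
  have cS: "closed S" unfolding S_def using fF cP by (intro closed_UN) auto
  have iS: "interior S = {}" unfolding S_def using fF cP affine_interior[OF s0 iK]
    by (intro finite_union_interior) auto
  have inS: "sh q d m \<in> S" for m
  proof -
    obtain y where y: "y \<in> K" "of_int D * (real q ^ m * x - y) \<in> \<int>"
      using orbit[OF KK D(2) x q] by blast
    obtain k where k: "of_int D * (real q ^ m * x - y) = of_int k" using y(2) Ints_cases by metis
    obtain N1 where N1: "real q ^ m * u - sh q d m = of_int N1" using sh_int[OF q e, of m] Ints_cases by metis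
    define ee where "ee = sh q d m - s * y"
    have "of_int E * ee = of_int E * (s * (real q ^ m * x - y) + real q ^ m * r - of_int N1)"
      unfolding ee_def using N1 ux by (simp add: algebra_simps)
    also have "\<dots> = of_int v2 * of_int p1 * (of_int D * (real q ^ m * x - y)) + of_int D * of_int v1 * real q ^ m * of_int p2 - of_int E * of_int N1"
      unfolding E_def pv1(2) pv2(2) using pv1(1) pv2(1) by (simp add: field_simps)
    also have "\<dots> = of_int (v2 * p1 * k + D * v1 * int q ^ m * p2 - E * N1)"
      unfolding k by simp
    finally have j: "of_int E * ee = of_int (v2 * p1 * k + D * v1 * int q ^ m * p2 - E * N1)" .
    define j where "j = v2 * p1 * k + D * v1 * int q ^ m * p2 - E * N1"
    have eej: "ee = of_int j / of_int E" using j E0 unfolding j_def by (simp add: field_simps)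
    have "\<bar>ee\<bar> \<le> 1 + \<bar>s\<bar> * M"
    proof -
      have "\<bar>s * y\<bar> \<le> \<bar>s\<bar> * M" using M y(1) by (simp add: abs_mult mult_left_mono)
      moreover have "0 \<le> sh q d m" "sh q d m \<le> 1" using sh_bounds[OF q dq] by auto
      ultimately show ?thesis unfolding ee_def by linarith
    qed
    then have "\<bar>of_int j\<bar> \<le> of_int E * (1 + \<bar>s\<bar> * M)"
      using eej E0 by (simp add: abs_divide field_simps)
    then have "\<bar>j\<bar> \<le> B" unfolding B_def by linarith
    then have "ee \<in> F" unfolding F_def eej by (intro imageI) (auto simp: abs_le_iff)
    moreover have "sh q d m = s * y + ee" unfolding ee_def by simp
    ultimately show ?thesis unfolding S_def using y(1) by blast
  qed
  have "\<exists>y \<in> ball (1/2) (1/2). y \<notin> S"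
  proof (rule ccontr)
    assume "\<not> ?thesis"
    then have "ball (1/2) (1/2) \<subseteq> S" by blast
    then have "(1/2::real) \<in> interior S" unfolding mem_interior by (intro exI[of _ "1/2::real"]) auto
    then show False using iS by simp
  qed
  then obtain y where y: "y \<in> ball (1/2) (1/2)" "y \<notin> S" by blast
  then have y01: "0 \<le> y" "y \<le> 1" unfolding mem_ball dist_real_def by linarith+
  obtain \<epsilon> where \<epsilon>: "\<epsilon> > 0" "ball y \<epsilon> \<subseteq> - S"
    using cS y(2) open_contains_ball[of "- S"] by (auto simp: open_Compl)
  obtain L0 where L0: "(1 / real q) ^ L0 < \<epsilon>" using real_arch_pow_inv[OF \<epsilon>(1), of "1 / real q"] q by auto
  have "(1 / real q) ^ Suc L0 \<le> (1 / real q) ^ L0" using q by (intro power_decreasing) auto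
  with L0 have L: "1 / real q ^ Suc L0 < \<epsilon>" by (simp add: power_divide)
  obtain m where m: "\<bar>sh q d m - y\<bar> \<le> 1 / real q ^ Suc L0"
    using sh_dense[OF q e un y01, of "Suc L0"] by auto
  then have "sh q d m \<in> ball y \<epsilon>" using L by (simp add: dist_real_def abs_minus_commute)
  then show False using \<epsilon>(2) inS by blast
qed

theorem theorem5:
  fixes q n :: nat and a :: "nat \<Rightarrow> real" and K :: "real set"
  assumes "q \<ge> 3" and "n \<ge> 1"
    and "\<forall>i\<in>{1..n}. a i \<in> \<rat> \<and> 0 \<le> a i \<and> a i \<le> real q - 1"
    and "K \<noteq> {}" and "compact K"
    and "K = (\<Union>i\<in>{1..n}. (\<lambda>x. (x + a i) / real q) ` K)"
    and "interior (closure K) = {}"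
  shows "(\<forall>t. 0 < t \<and> t < 1 \<and> has_universal_expansion q t \<longrightarrow>
            (\<forall>x\<in>K. x - t \<notin> \<rat>) \<and> (\<forall>x\<in>K. x + t \<notin> \<rat>) \<and>
            (\<forall>x\<in>K - {0}. x / t \<notin> \<rat>)) \<and>
         (\<forall>t. 1 < t \<and> has_universal_expansion q (1 / t) \<longrightarrow>
            (\<forall>x\<in>K - {0}. t * x \<notin> \<rat>))"
proof -
  have q: "q \<ge> 2" using assms(1) by simp
  have aQ: "\<forall>i\<in>{1..n}. a i \<in> \<rat>" using assms(3) by blast
  have iK: "interior K = {}" using assms(7) interior_mono[OF closure_subset[of K]] by blast
  note M = main[OF q aQ assms(5) assms(6) iK]
  show ?thesis
  proof (intro conjI allI impI ballI)
    fix t x assume t: "0 < t \<and> t < 1 \<and> has_universal_expansion q t" and x: "x \<in> K"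
    show "x - t \<notin> \<rat>"
    proof
      assume r: "x - t \<in> \<rat>"
      have "-(x-t) \<in> \<rat>" using r by (simp only: Rats_minus_iff)
      then show False by (rule M[of t 1 "-(x-t)" x, rotated 3]) (use t x in auto)
    qed
    show "x + t \<notin> \<rat>"
    proof
      assume r: "x + t \<in> \<rat>"
      show False by (rule M[of t "-1" "x+t" x]) (use t x r Rats_minus_iff in auto)
    qed
  next
    fix t x assume t: "0 < t \<and> t < 1 \<and> has_universal_expansion q t" and x: "x \<in> K - {0}"
    show "x / t \<notin> \<rat>"
    proof
      assume r: "x / t \<in> \<rat>"
      have "x / t \<noteq> 0" using t x by auto
      have h: "1 / (x/t) \<in> \<rat>" by (rule Rats_divide[OF Rats_1 r])
      then show False using \<open>x / t \<noteq> 0\<close> by (intro M[of t "1 / (x/t)" 0 x]) (use t x h in auto)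
    qed
  next
    fix t x assume t: "1 < t \<and> has_universal_expansion q (1 / t)" and x: "x \<in> K - {0}"
    show "t * x \<notin> \<rat>"
    proof
      assume r: "t * x \<in> \<rat>"
      have "t * x \<noteq> 0" using t x by auto
      have h: "1 / (t*x) \<in> \<rat>" by (rule Rats_divide[OF Rats_1 r])
      then show False using \<open>t * x \<noteq> 0\<close> by (intro M[of "1/t" "1 / (t*x)" 0 x]) (use t x h in auto)
    qed
  qed
qed

end
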